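(* For every nonzero $f\in S$, $\operatorname{ann}_S\big(D/D(f)\big)=S\cdot f$.
   Context: $\mathbb K$ is a field of characteristic zero, $S=\mathbb K[x_1,\dots,x_n]$, $D=\mathrm{Der}_{\mathbb K}(S)$, the free $S$-module with basis $\partial_i=\partial/\partial x_i$. For $g\in S$ and $e\ge1$, $D(g;e)=\{\delta\in D:\delta(g)\in g^eS\}$. For nonzero $f$ with factorization $f=c f_1^{e_1}\cdots f_r^{e_r}$ into pairwise non-associate irreducibles ($c\in\mathbb K^*$), $D(f)=\bigcap_i D(f_i;e_i)$. *)

theory Defs
  imports "HOL-Library.Poly_Mapping" "HOL-Computational_Algebra.Factorial_Ring"
begin

text \<open>The polynomial ring S = K[x_i : i in 'n] over a field K, with 'n a finite
  index type of variables: polynomials are finitely supported functions from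
  monomials (exponent vectors 'n =>0 nat) to K.\<close>

type_synonym ('n, 'k) mpoly = "('n \<Rightarrow>\<^sub>0 nat) \<Rightarrow>\<^sub>0 'k"

definition const_mp :: "'k::zero \<Rightarrow> ('n, 'k) mpoly" where
  "const_mp c = Poly_Mapping.single 0 c"

definition Der :: "(('n, 'k::field) mpoly \<Rightarrow> ('n, 'k) mpoly) set" where
  "Der = {\<delta>. (\<forall>p q. \<delta> (p + q) = \<delta> p + \<delta> q)
            \<and> (\<forall>c p. \<delta> (const_mp c * p) = const_mp c * \<delta> p)
            \<and> (\<forall>p q. \<delta> (p * q) = p * \<delta> q + q * \<delta> p)}"

definition Der_log :: "('n, 'k::field) mpoly \<Rightarrow> nat \<Rightarrow> (('n, 'k) mpoly \<Rightarrow> ('n, 'k) mpoly) set" where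
  "Der_log g e = {\<delta> \<in> Der. g ^ e dvd \<delta> g}"

definition smult_der :: "('n, 'k::field) mpoly \<Rightarrow> (('n, 'k) mpoly \<Rightarrow> ('n, 'k) mpoly)
    \<Rightarrow> (('n, 'k) mpoly \<Rightarrow> ('n, 'k) mpoly)" where
  "smult_der s \<delta> = (\<lambda>g. s * \<delta> g)"

definition ann_quot :: "(('n, 'k::field) mpoly \<Rightarrow> ('n, 'k) mpoly) set \<Rightarrow> ('n, 'k) mpoly set" where
  "ann_quot M = {s. \<forall>\<delta>\<in>Der. smult_der s \<delta> \<in> M}"

end

theory Submission
  imports Defs "HOL-Computational_Algebra.Polynomial"
begin

abbreviation lk where "lk \<equiv> poly_mapping.lookup"
abbreviation kys where "kys \<equiv> Poly_Mapping.keys"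
abbreviation sng where "sng \<equiv> Poly_Mapping.single"

lemma idom_test: "(x::('v::linorder, 'k::field) mpoly) * y = 0 \<Longrightarrow> x = 0 \<or> y = 0" by simp

lemma pm_sum_singles: "p = (\<Sum>m\<in>kys p. sng m (lk p m))"
proof (rule poly_mapping_eqI)
  fix k
  show "lk p k = lk (\<Sum>m\<in>kys p. sng m (lk p m)) k"
    by (simp add: lookup_sum lookup_single when_def in_keys_iff)
qed

definition inV :: "'v set \<Rightarrow> ('v, 'k::zero) mpoly \<Rightarrow> bool" where
  "inV V p \<longleftrightarrow> (\<forall>m\<in>kys p. kys (m::'v \<Rightarrow>\<^sub>0 nat) \<subseteq> V)"

lemma inV_0[simp]: "inV V 0" by (simp add: inV_def)
lemma inV_single: "kys m \<subseteq> V \<Longrightarrow> inV V (sng m c)" by (simp add: inV_def)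
lemma inV_const[simp]: "inV V (sng 0 c)" by (simp add: inV_def)
lemma inV_of_nat[simp]: "inV V (of_nat n :: ('v,'k::comm_ring_1) mpoly)"
proof -
  have "inV V (sng 0 (of_nat n) :: ('v,'k::comm_ring_1) mpoly)" by (rule inV_const)
  then show ?thesis by (simp only: single_of_nat)
qed
lemma inV_1[simp]: "inV V (1::('v,'k::comm_ring_1) mpoly)"
proof -
  have "inV V (sng 0 1 :: ('v,'k::comm_ring_1) mpoly)" by (rule inV_const)
  then show ?thesis by (simp only: single_one)
qed
lemma inV_add: "inV V p \<Longrightarrow> inV V q \<Longrightarrow> inV V (p + q)"
  unfolding inV_def using keys_add[of p q] by (meson Un_iff subsetD)
lemma inV_uminus: "inV V (p::('v,'k::ab_group_add) mpoly) \<Longrightarrow> inV V (- p)"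
  unfolding inV_def keys_minus .
lemma inV_diff: "inV V (p::('v,'k::ab_group_add) mpoly) \<Longrightarrow> inV V q \<Longrightarrow> inV V (p - q)"
  using inV_add[OF _ inV_uminus] by (metis diff_conv_add_uminus)
lemma keys_add_nat: "kys ((a::'v \<Rightarrow>\<^sub>0 nat) + b) = kys a \<union> kys b"
  by (auto simp: in_keys_iff lookup_add)
lemma inV_mult: "inV V (p::('v,'k::comm_ring_1) mpoly) \<Longrightarrow> inV V q \<Longrightarrow> inV V (p * q)"
  unfolding inV_def using keys_mult[of p q] by (force simp: keys_add_nat)
lemma inV_sum: "(\<And>i. i \<in> I \<Longrightarrow> inV V (f i)) \<Longrightarrow> inV V (sum f I :: ('v,'k::comm_ring_1) mpoly)"
  by (induction I rule: infinite_finite_induct) (auto intro: inV_add)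
lemma inV_power: "inV V (p::('v,'k::comm_ring_1) mpoly) \<Longrightarrow> inV V (p ^ n)"
  by (induction n) (auto intro: inV_mult)
lemma inV_mono: "inV V p \<Longrightarrow> V \<subseteq> W \<Longrightarrow> inV W p" unfolding inV_def by blast
lemma inV_Int: "inV V p \<Longrightarrow> inV W p \<Longrightarrow> inV (V \<inter> W) p" unfolding inV_def by blast
lemma inV_UNIV[simp]: "inV UNIV p" unfolding inV_def by blast

definition Xv :: "'v \<Rightarrow> ('v, 'k::comm_ring_1) mpoly" where
  "Xv x = sng (sng x 1) 1"

lemma Xv_power: "Xv x ^ n = sng (sng x n) 1"
  by (induction n) (simp_all add: Xv_def mult_single single_add[symmetric] add.commute)

definition ev :: "'v \<Rightarrow> ('v, 'k::comm_ring_1) mpoly poly \<Rightarrow> ('v, 'k) mpoly" where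
  "ev x Q = poly Q (Xv x)"

lemma ev_add[simp]: "ev x (P + Q) = ev x P + ev x Q" by (simp add: ev_def)
lemma ev_diff[simp]: "ev x (P - Q) = ev x P - ev x Q" by (simp add: ev_def)
lemma ev_mult[simp]: "ev x (P * Q) = ev x P * ev x Q" by (simp add: ev_def)
lemma ev_const[simp]: "ev x [:c:] = c" by (simp add: ev_def)
lemma ev_0[simp]: "ev x 0 = 0" by (simp add: ev_def)
lemma ev_smult[simp]: "ev x (smult c P) = c * ev x P" by (simp add: ev_def)

definition cin :: "'v set \<Rightarrow> ('v, 'k::comm_ring_1) mpoly poly \<Rightarrow> bool" where
  "cin V Q \<longleftrightarrow> (\<forall>i. inV V (coeff Q i))"

lemma cin_add: "cin V P \<Longrightarrow> cin V Q \<Longrightarrow> cin V (P + Q)"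
  by (simp add: cin_def inV_add)
lemma cin_diff: "cin V P \<Longrightarrow> cin V Q \<Longrightarrow> cin V (P - Q)"
  unfolding cin_def coeff_diff by (blast intro: inV_diff)
lemma cin_mult: "cin V P \<Longrightarrow> cin V Q \<Longrightarrow> cin V (P * Q)"
  unfolding cin_def coeff_mult by (blast intro: inV_sum inV_mult)
lemma cin_const: "inV V c \<Longrightarrow> cin V [:c:]"
  by (simp add: cin_def coeff_pCons split: nat.split)
lemma cin_0[simp]: "cin V 0" by (simp add: cin_def)
lemma cin_monom: "inV V c \<Longrightarrow> cin V (monom c n)"
  by (simp add: cin_def coeff_monom)
lemma cin_smult: "inV V c \<Longrightarrow> cin V P \<Longrightarrow> cin V (smult c P)"
  unfolding cin_def coeff_smult by (blast intro: inV_mult)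
lemma cin_sum: "(\<And>i. i \<in> I \<Longrightarrow> cin V (f i)) \<Longrightarrow> cin V (sum f I)"
  by (induction I rule: infinite_finite_induct) (auto intro: cin_add)
lemma cin_pderiv: "cin V P \<Longrightarrow> cin V (pderiv P)"
  unfolding cin_def coeff_pderiv by (metis inV_mult inV_of_nat)

lemma keys_update_nat: "kys (Poly_Mapping.update x 0 (m::'v \<Rightarrow>\<^sub>0 nat)) = kys m - {x}"
  by (auto simp: in_keys_iff lookup_update split: if_splits)

lemma update_add_single: "Poly_Mapping.update x 0 m + sng x (lk m x) = (m::'v \<Rightarrow>\<^sub>0 nat)"
  by (rule poly_mapping_eqI) (simp add: lookup_add lookup_update lookup_single when_def)

lemma lk_mult_Xpow:
  fixes c :: "('v, 'k::comm_ring_1) mpoly"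
  assumes "inV (-{x}) c"
  shows "lk (c * sng (sng x i) 1) m = (if lk m x = i then lk c (Poly_Mapping.update x 0 m) else 0)"
proof -
  have c: "c * sng (sng x i) 1 = (\<Sum>n\<in>kys c. sng (n + sng x i) (lk c n))"
    by (subst pm_sum_singles[of c]) (simp add: sum_distrib_right mult_single)
  have key: "n + sng x i = m \<longleftrightarrow> (lk m x = i \<and> n = Poly_Mapping.update x 0 m)" if "n \<in> kys c" for n
  proof -
    have nx: "lk n x = 0" using assms that unfolding inV_def by (auto simp: in_keys_iff)
    show ?thesis
    proof
      assume "n + sng x i = m"
      then show "lk m x = i \<and> n = Poly_Mapping.update x 0 m"
        using nx by (auto intro!: poly_mapping_eqI simp: lookup_add lookup_update lookup_single when_def)
    next
      assume "lk m x = i \<and> n = Poly_Mapping.update x 0 m"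
      then show "n + sng x i = m" using update_add_single[of x m] by simp
    qed
  qed
  have "lk (c * sng (sng x i) 1) m = (\<Sum>n\<in>kys c. if lk m x = i \<and> n = Poly_Mapping.update x 0 m then lk c n else 0)"
    unfolding c lookup_sum by (intro sum.cong refl) (simp add: lookup_single when_def key)
  also have "\<dots> = (if lk m x = i then lk c (Poly_Mapping.update x 0 m) else 0)"
    by (cases "Poly_Mapping.update x 0 m \<in> kys c") (auto simp: sum.delta' in_keys_iff)
  finally show ?thesis .
qed

lemma lk_ev:
  fixes Q :: "('v, 'k::comm_ring_1) mpoly poly"
  assumes "cin (-{x}) Q"
  shows "lk (ev x Q) m = lk (coeff Q (lk m x)) (Poly_Mapping.update x 0 m)"
proof -
  have "ev x Q = (\<Sum>i\<le>degree Q. coeff Q i * sng (sng x i) 1)"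
    by (simp add: ev_def poly_altdef Xv_power)
  then have "lk (ev x Q) m = (\<Sum>i\<le>degree Q. if lk m x = i then lk (coeff Q i) (Poly_Mapping.update x 0 m) else 0)"
    using assms by (simp add: lookup_sum lk_mult_Xpow cin_def)
  also have "\<dots> = lk (coeff Q (lk m x)) (Poly_Mapping.update x 0 m)"
    by (cases "lk m x \<le> degree Q") (auto simp: sum.delta coeff_eq_0)
  finally show ?thesis .
qed

lemma ev_inj0:
  fixes Q :: "('v, 'k::comm_ring_1) mpoly poly"
  assumes "cin (-{x}) Q" "ev x Q = 0"
  shows "Q = 0"
proof (rule poly_eqI, rule poly_mapping_eqI)
  fix i n
  show "lk (coeff Q i) n = lk (coeff 0 i) n"
  proof (cases "lk n x = 0")
    case True
    define m where "m = n + sng x i"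
    have "lk m x = i" using True by (simp add: m_def lookup_add)
    moreover have "Poly_Mapping.update x 0 m = n"
      using True by (auto intro!: poly_mapping_eqI simp: m_def lookup_add lookup_update lookup_single when_def)
    ultimately show ?thesis using lk_ev[OF assms(1), of m] assms(2) by simp
  next
    case False
    have "n \<notin> kys (coeff Q i)"
    proof
      assume "n \<in> kys (coeff Q i)"
      then have "kys n \<subseteq> -{x}" using assms(1) unfolding cin_def inV_def by blast
      then show False using False by (auto simp: in_keys_iff)
    qed
    then show ?thesis by (metis in_keys_iff coeff_0 lookup_zero)
  qed
qed

lemma ev_inj:
  fixes P Q :: "('v, 'k::comm_ring_1) mpoly poly"
  assumes "cin (-{x}) P" "cin (-{x}) Q" "ev x P = ev x Q"
  shows "P = Q"
  using ev_inj0[of x "P - Q"] assms cin_diff by force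

definition phiQ :: "'v \<Rightarrow> ('v, 'k::comm_ring_1) mpoly \<Rightarrow> ('v, 'k) mpoly poly" where
  "phiQ x p = (\<Sum>m\<in>kys p. monom (sng (Poly_Mapping.update x 0 m) (lk p m)) (lk m x))"

lemma ev_phiQ: "ev x (phiQ x p) = p"
proof -
  have "ev x (phiQ x p) = (\<Sum>m\<in>kys p. sng (Poly_Mapping.update x 0 m) (lk p m) * sng (sng x (lk m x)) 1)"
    by (simp add: phiQ_def ev_def poly_sum poly_monom Xv_power)
  also have "\<dots> = (\<Sum>m\<in>kys p. sng m (lk p m))"
    by (simp add: mult_single update_add_single)
  also have "\<dots> = p" by (rule pm_sum_singles[symmetric])
  finally show ?thesis .
qed

lemma cin_phiQ: "inV V p \<Longrightarrow> cin (V - {x}) (phiQ x p)"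
  unfolding phiQ_def
  by (intro cin_sum cin_monom inV_single) (auto simp: inV_def keys_update_nat)

definition phi :: "'v \<Rightarrow> ('v, 'k::comm_ring_1) mpoly \<Rightarrow> ('v, 'k) mpoly poly" where
  "phi x p = (THE Q. cin (-{x}) Q \<and> ev x Q = p)"

lemma phi_unique: "cin (-{x}) Q \<Longrightarrow> ev x Q = p \<Longrightarrow> phi x p = Q"
  unfolding phi_def by (rule the_equality) (auto intro: ev_inj)

lemma phi_eq: "phi x p = phiQ x p"
proof -
  have "cin (-{x}) (phiQ x p)" using cin_phiQ[of UNIV p x] by (simp add: Compl_eq_Diff_UNIV)
  then show ?thesis by (rule phi_unique[OF _ ev_phiQ])
qed

lemma ev_phi[simp]: "ev x (phi x p) = p" by (simp add: phi_eq ev_phiQ)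
lemma cin_phi: "inV V p \<Longrightarrow> cin (V - {x}) (phi x p)" by (simp add: phi_eq cin_phiQ)
lemma cin_phi': "cin (-{x}) (phi x p)" using cin_phi[of UNIV p x] by (simp add: Compl_eq_Diff_UNIV)

lemma phi_add: "phi x (p + q) = phi x p + phi x q"
  by (rule phi_unique) (auto intro: cin_add cin_phi')
lemma phi_diff: "phi x (p - q) = phi x p - phi x q"
  by (rule phi_unique) (auto intro: cin_diff cin_phi')
lemma phi_mult: "phi x (p * q) = phi x p * phi x q"
  by (rule phi_unique) (auto intro: cin_mult cin_phi')
lemma phi_const: "inV (-{x}) c \<Longrightarrow> phi x c = [:c:]"
  by (rule phi_unique) (auto intro: cin_const)
lemma phi_0[simp]: "phi x 0 = 0"
  by (rule phi_unique) auto
lemma phi_eq_0_iff[simp]: "phi x p = 0 \<longleftrightarrow> p = 0"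
proof
  assume "phi x p = 0" then show "p = 0" using ev_phi[of x p] by simp
qed simp

definition degx :: "'v \<Rightarrow> ('v::linorder, 'k::field) mpoly \<Rightarrow> nat" where
  "degx x p = degree (phi x p)"

lemma degx_mult: "p \<noteq> 0 \<Longrightarrow> q \<noteq> 0 \<Longrightarrow> degx x (p * q) = degx x p + degx x q"
  unfolding degx_def phi_mult by (rule degree_mult_eq) auto

lemma degx_0_iff: "degx x p = 0 \<longleftrightarrow> inV (-{x}) p"
proof
  assume "degx x p = 0"
  then have "phi x p = [:coeff (phi x p) 0:]" unfolding degx_def by (rule degree_0_id[symmetric])
  then have "p = coeff (phi x p) 0" using ev_phi[of x p] by (metis ev_const)
  then show "inV (-{x}) p" using cin_phi'[of x p] unfolding cin_def by metis
next
  assume "inV (-{x}) p"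
  then show "degx x p = 0" unfolding degx_def by (simp add: phi_const)
qed

lemma inV_iff: "inV V p \<longleftrightarrow> (\<forall>x. x \<notin> V \<longrightarrow> inV (-{x}) p)"
  unfolding inV_def by blast

lemma inV_iff_degx: "inV V p \<longleftrightarrow> (\<forall>x. x \<notin> V \<longrightarrow> degx x p = 0)"
  unfolding degx_0_iff by (rule inV_iff)

lemma inV_quot:
  fixes a q b :: "('v::linorder, 'k::field) mpoly"
  assumes "b = a * q" "a \<noteq> 0" "inV V b"
  shows "inV V q"
proof (cases "q = 0")
  case True then show ?thesis by simp
next
  case False
  show ?thesis unfolding inV_iff_degx
  proof (intro allI impI)
    fix x assume "x \<notin> V"
    then have "degx x b = 0" using assms(3) inV_iff_degx by blast
    then show "degx x q = 0" using degx_mult[OF assms(2) False, of x] assms(1) by simp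
  qed
qed

lemma inV_dvd:
  fixes a b :: "('v::linorder, 'k::field) mpoly"
  assumes "a dvd b" "b \<noteq> 0" "inV V b"
  shows "inV V a"
proof -
  obtain q where "b = q * a" using assms(1) by (metis dvd_def mult.commute)
  moreover have "q \<noteq> 0" using assms(2) calculation by auto
  ultimately show ?thesis using inV_quot assms(3) by blast
qed

lemma inV_empty_const: "inV {} p \<Longrightarrow> p = sng 0 (lk p 0)"
proof (rule poly_mapping_eqI)
  fix m assume "inV {} p"
  then have "m \<in> kys p \<Longrightarrow> m = 0" unfolding inV_def by auto
  then show "lk p m = lk (sng 0 (lk p 0)) m"
    by (cases "m = 0") (auto simp: lookup_single in_keys_iff)
qed

lemma unit_iff_inV_empty: "(p::('v::linorder, 'k::field) mpoly) dvd 1 \<longleftrightarrow> p \<noteq> 0 \<and> inV {} p"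
proof
  assume u: "p dvd 1"
  then have p0: "p \<noteq> 0" by auto
  obtain q where q: "1 = p * q" using u by (auto elim: dvdE)
  then have q0: "q \<noteq> 0" by auto
  from q have "inV {} q" "inV {} p" using inV_quot[of 1 p q "{}"] inV_quot[of 1 q p "{}"] p0 q0
    by (auto simp: mult.commute)
  then show "p \<noteq> 0 \<and> inV {} p" using p0 q0 by simp
next
  assume a: "p \<noteq> 0 \<and> inV {} p"
  define c where "c = lk p 0"
  have p: "p = sng 0 c" using a inV_empty_const c_def by blast
  have c: "c \<noteq> 0" using a p by (metis single_zero)
  have "sng 0 c * sng 0 (inverse c) = sng (0+0) (c * inverse c)"
    by (rule mult_single)
  also have "\<dots> = sng 0 1" by (simp only: add_0 right_inverse[OF c])
  also have "\<dots> = 1" by (rule single_one)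
  finally have "p * sng 0 (inverse c) = 1" using p by simp
  then show "p dvd 1" by (rule dvdI[OF sym])
qed

lemma degx_unit: "p dvd 1 \<Longrightarrow> degx x p = 0"
  unfolding unit_iff_inV_empty degx_0_iff using inV_mono[of "{}" p "-{x}"] by blast

lemma nonunit_degx:
  assumes "inV V p" "p \<noteq> 0" "\<not> p dvd 1"
  shows "\<exists>x\<in>V. degx x p > 0"
proof (rule ccontr)
  assume "\<not> ?thesis"
  then have "\<forall>x. degx x p = 0" using assms(1) unfolding inV_iff_degx by auto
  then have "inV {} p" unfolding inV_iff_degx by auto
  then show False using assms unit_iff_inV_empty by blast
qed

definition mu :: "'v set \<Rightarrow> ('v::linorder, 'k::field) mpoly \<Rightarrow> nat" where
  "mu V p = (\<Sum>x\<in>V. degx x p)"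

lemma mu_less:
  assumes "finite V" "inV V c" "c = a * b" "c \<noteq> 0" "\<not> b dvd 1"
  shows "mu V a < mu V c"
proof -
  have a0: "a \<noteq> 0" and b0: "b \<noteq> 0" using assms by auto
  have "inV V b" using inV_quot[OF assms(3) a0 assms(2)] .
  then obtain y where y: "y \<in> V" "degx y b > 0" using nonunit_degx b0 assms(5) by blast
  have d: "degx x c = degx x a + degx x b" for x using degx_mult[OF a0 b0] assms(3) by simp
  show ?thesis unfolding mu_def
  proof (rule sum_strict_mono_ex1[OF assms(1)])
    show "\<forall>x\<in>V. degx x a \<le> degx x c" using d by simp
    show "\<exists>x\<in>V. degx x a < degx x c" using d y by (intro bexI[of _ y]) auto
  qed
qed

lemma irr_divisor:
  fixes c :: "('v::linorder, 'k::field) mpoly"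
  assumes "finite V" "inV V c" "c \<noteq> 0" "\<not> c dvd 1"
  shows "\<exists>\<pi>. irreducible \<pi> \<and> \<pi> dvd c \<and> inV V \<pi>"
  using assms(2-4)
proof (induction "mu V c" arbitrary: c rule: less_induct)
  case less
  show ?case
  proof (cases "irreducible c")
    case True then show ?thesis using less.prems by (intro exI[of _ c]) simp
  next
    case False
    then obtain a b where ab: "c = a * b" "\<not> a dvd 1" "\<not> b dvd 1"
      using less.prems unfolding irreducible_def by blast
    have a0: "a \<noteq> 0" using ab less.prems by auto
    have aV: "inV V a" using inV_quot[of c b a V] ab less.prems by (auto simp: mult.commute)
    have "mu V a < mu V c" using mu_less[OF assms(1) less.prems(1) ab(1) less.prems(2) ab(3)] .
    then obtain \<pi> where "irreducible \<pi>" "\<pi> dvd a" "inV V \<pi>" using less.hyps aV a0 ab(2) by blast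
    then show ?thesis using ab(1) by (meson dvd_mult2)
  qed
qed

lemma cin_mono: "cin V P \<Longrightarrow> V \<subseteq> W \<Longrightarrow> cin W P"
  unfolding cin_def using inV_mono by blast

lemma inV_lead: "cin W G \<Longrightarrow> inV W (lead_coeff G)"
  unfolding cin_def by blast

lemma pdiv_cin:
  fixes G H :: "('v::linorder,'k::field) mpoly poly"
  assumes "cin W G" "cin W H" "degree G \<ge> 1"
  shows "\<exists>k Q R. cin W Q \<and> cin W R \<and> smult (lead_coeff G ^ k) H = Q * G + R \<and> degree R < degree G"
  using assms(2)
proof (induction "degree H" arbitrary: H rule: less_induct)
  case less
  show ?case
  proof (cases "degree H < degree G")
    case True
    then show ?thesis using less.prems by (intro exI[of _ 0] exI[of _ 0] exI[of _ H]) auto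
  next
    case False
    define d where "d = degree H - degree G"
    define a where "a = lead_coeff G"
    define b where "b = lead_coeff H"
    define H' where "H' = smult a H - monom b d * G"
    have dH: "degree H = d + degree G" using False d_def by simp
    have cH': "cin W H'" unfolding H'_def a_def b_def
      by (intro cin_diff cin_smult cin_mult cin_monom inV_lead assms less.prems)
    have le: "degree H' \<le> degree H"
    proof -
      have "degree (smult a H) \<le> degree H" by (rule degree_smult_le)
      moreover have "degree (monom b d * G) \<le> degree H"
        using degree_mult_le[of "monom b d" G] degree_monom_le[of b d] dH by linarith
      ultimately show ?thesis unfolding H'_def by (meson degree_diff_le)
    qed
    have cm: "coeff (monom b d * G) (d + degree G) = b * coeff G (degree G)" by (simp only: coeff_monom_mult) simp
    have "coeff H' (degree H) = coeff (smult a H) (degree H) - coeff (monom b d * G) (d + degree G)"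
      unfolding H'_def coeff_diff dH ..
    also have "\<dots> = a * b - b * a" unfolding cm by (simp add: a_def b_def)
    finally have c0: "coeff H' (degree H) = 0" by (simp add: mult.commute)
    have lt: "degree H' < degree H"
    proof (cases "H' = 0")
      case True then show ?thesis using dH assms(3) by simp
    next
      case False
      then have "coeff H' (degree H') \<noteq> 0" by simp
      then show ?thesis using le c0 by (metis le_neq_implies_less)
    qed
    obtain k Q R where QR: "cin W Q" "cin W R" "smult (a ^ k) H' = Q * G + R" "degree R < degree G"
      using less.hyps[OF lt cH'] unfolding a_def by blast
    define Q2 where "Q2 = Q + smult (a ^ k) (monom b d)"
    have "smult (a ^ Suc k) H = smult (a ^ k) (H' + monom b d * G)"
      unfolding H'_def by (simp add: smult_add_right mult.commute)
    also have "\<dots> = Q2 * G + R"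
      unfolding Q2_def smult_add_right QR(3) by (simp add: algebra_simps)
    finally have eq: "smult (a ^ Suc k) H = Q2 * G + R" .
    have "cin W Q2" unfolding Q2_def a_def b_def
      by (intro cin_add cin_smult cin_monom inV_power inV_lead assms less.prems QR(1))
    then show ?thesis using eq QR unfolding a_def by blast
  qed
qed

lemma inV_Xv: "x \<in> V \<Longrightarrow> inV V (Xv x :: ('v,'k::comm_ring_1) mpoly)"
  unfolding Xv_def by (rule inV_single) simp

lemma inV_ev:
  fixes Q :: "('v::linorder,'k::field) mpoly poly"
  assumes "cin W Q" "W \<subseteq> V" "x \<in> V"
  shows "inV V (ev x Q)"
proof -
  have "ev x Q = (\<Sum>i\<le>degree Q. coeff Q i * Xv x ^ i)"
    by (simp add: ev_def poly_altdef)
  moreover have "inV V (coeff Q i * Xv x ^ i)" for i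
    using assms inV_mono unfolding cin_def by (blast intro: inV_mult inV_power inV_Xv)
  ultimately show ?thesis by (auto intro: inV_sum)
qed

definition lcx :: "'v \<Rightarrow> ('v::linorder,'k::field) mpoly \<Rightarrow> ('v,'k) mpoly" where
  "lcx x g = lead_coeff (phi x g)"

lemma lcx_nz: "g \<noteq> 0 \<Longrightarrow> lcx x g \<noteq> 0" by (simp add: lcx_def)

lemma inV_lcx: "inV V g \<Longrightarrow> inV (V - {x}) (lcx x g)"
  unfolding lcx_def by (rule inV_lead) (rule cin_phi)

lemma phi_ev: "cin (-{x}) Q \<Longrightarrow> phi x (ev x Q) = Q"
  by (rule phi_unique) auto

lemma pdiv_U:
  fixes g h :: "('v::linorder,'k::field) mpoly"
  assumes "x \<notin> W" "inV (insert x W) g" "inV (insert x W) h" "degx x g \<ge> 1"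
  shows "\<exists>k q r. inV (insert x W) q \<and> inV (insert x W) r \<and> lcx x g ^ k * h = q * g + r
    \<and> degx x r < degx x g"
proof -
  have W: "insert x W - {x} = W" using assms(1) by auto
  have cg: "cin W (phi x g)" "cin W (phi x h)" using cin_phi[OF assms(2), of x] cin_phi[OF assms(3), of x] unfolding W by auto
  have d1: "degree (phi x g) \<ge> 1" using assms(4) unfolding degx_def .
  obtain k Q R where QR: "cin W Q" "cin W R" "smult (lead_coeff (phi x g) ^ k) (phi x h) = Q * phi x g + R"
     "degree R < degree (phi x g)"
    using pdiv_cin[OF cg d1] by blast
  have Wx: "W \<subseteq> -{x}" using assms(1) by blast
  have cR: "cin (-{x}) R" using cin_mono[OF QR(2) Wx] .
  have "ev x (smult (lead_coeff (phi x g) ^ k) (phi x h)) = ev x (Q * phi x g + R)" using QR(3) by simp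
  then have eq: "lcx x g ^ k * h = ev x Q * g + ev x R" by (simp add: lcx_def)
  have "degx x (ev x R) < degx x g" unfolding degx_def phi_ev[OF cR] using QR(4) by simp
  moreover have "inV (insert x W) (ev x Q)" "inV (insert x W) (ev x R)"
    using QR(1,2) by (auto intro: inV_ev)
  ultimately show ?thesis using eq by blast
qed

lemma dvd_coeffs:
  fixes \<pi> c :: "('v::linorder,'k::field) mpoly"
  assumes "inV (-{x}) \<pi>"
  shows "\<pi> dvd c \<longleftrightarrow> (\<forall>i. \<pi> dvd coeff (phi x c) i)"
proof
  assume "\<pi> dvd c"
  then obtain t where "c = \<pi> * t" by (auto elim: dvdE)
  then have "phi x c = smult \<pi> (phi x t)" by (simp add: phi_mult phi_const[OF assms])
  then show "\<forall>i. \<pi> dvd coeff (phi x c) i" by simp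
next
  assume "\<forall>i. \<pi> dvd coeff (phi x c) i"
  then have "[:\<pi>:] dvd phi x c" by (simp add: const_poly_dvd_iff)
  then obtain T where "phi x c = [:\<pi>:] * T" by (auto elim: dvdE)
  then have "ev x (phi x c) = \<pi> * ev x T" by simp
  then show "\<pi> dvd c" by simp
qed

lemma unit_cancel:
  fixes p c t :: "('v::linorder,'k::field) mpoly"
  assumes "c dvd 1" "p dvd c * t" shows "p dvd t"
proof -
  obtain c' where "1 = c * c'" using assms(1) by (auto elim: dvdE)
  then have "t = c' * (c * t)" by (metis mult.assoc mult.commute mult_1)
  then show ?thesis using assms(2) by (metis dvd_mult)
qed

lemma degx_const0: "inV W p \<Longrightarrow> x \<notin> W \<Longrightarrow> degx x p = 0"
  unfolding degx_0_iff by (erule inV_mono) blast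

lemma inV_W_of: "inV (insert x W) p \<Longrightarrow> degx x p = 0 \<Longrightarrow> x \<notin> W \<Longrightarrow> inV W p"
proof -
  assume a: "inV (insert x W) p" "degx x p = 0" "x \<notin> W"
  then have "inV (insert x W \<inter> -{x}) p" using inV_Int degx_0_iff by blast
  moreover have "insert x W \<inter> -{x} = W" using a(3) by blast
  ultimately show ?thesis by simp
qed

context
  fixes x :: "'v::linorder" and W :: "'v set"
  assumes xW: "x \<notin> W" and fW: "finite W"
  and PRW: "\<And>(p::('v,'k::field) mpoly) a b. inV W p \<Longrightarrow> inV W a \<Longrightarrow> inV W b \<Longrightarrow>
      irreducible p \<Longrightarrow> p dvd a * b \<Longrightarrow> p dvd a \<or> p dvd b"
begin

lemma lift:
  fixes \<pi> a b :: "('v,'k) mpoly"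
  assumes "inV W \<pi>" "irreducible \<pi>" "inV (insert x W) a" "inV (insert x W) b" "\<pi> dvd a * b"
  shows "\<pi> dvd a \<or> \<pi> dvd b"
proof (rule ccontr)
  assume na: "\<not> (\<pi> dvd a \<or> \<pi> dvd b)"
  have Wx: "W \<subseteq> -{x}" using xW by blast
  have px: "inV (-{x}) \<pi>" using inV_mono[OF assms(1) Wx] .
  have WW: "insert x W - {x} = W" using xW by blast
  define A where "A i = coeff (phi x a) i" for i
  define B where "B i = coeff (phi x b) i" for i
  have AW: "inV W (A i)" for i using cin_phi[OF assms(3), of x] unfolding WW cin_def A_def by blast
  have BW: "inV W (B i)" for i using cin_phi[OF assms(4), of x] unfolding WW cin_def B_def by blast
  have exA: "\<exists>i. \<not> \<pi> dvd A i" using na dvd_coeffs[OF px, of a] unfolding A_def by blast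
  have exB: "\<exists>i. \<not> \<pi> dvd B i" using na dvd_coeffs[OF px, of b] unfolding B_def by blast
  define i where "i = (LEAST i. \<not> \<pi> dvd A i)"
  define j where "j = (LEAST j. \<not> \<pi> dvd B j)"
  have Ai: "\<not> \<pi> dvd A i" unfolding i_def using exA by (rule LeastI_ex)
  have Bj: "\<not> \<pi> dvd B j" unfolding j_def using exB by (rule LeastI_ex)
  have Ak: "\<pi> dvd A k" if "k < i" for k using that not_less_Least unfolding i_def by blast
  have Bk: "\<pi> dvd B k" if "k < j" for k using that not_less_Least unfolding j_def by blast
  have d1: "\<pi> dvd coeff (phi x (a * b)) (i + j)" using dvd_coeffs[OF px, of "a * b"] assms(5) by blast
  have e1: "coeff (phi x (a * b)) (i + j) = (\<Sum>k\<le>i+j. A k * B (i + j - k))"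
    unfolding phi_mult coeff_mult A_def B_def ..
  have e2: "(\<Sum>k\<le>i+j. A k * B (i + j - k)) = A i * B j + (\<Sum>k\<in>{..i+j} - {i}. A k * B (i + j - k))"
    by (subst sum.remove[of _ i]) auto
  have d2: "\<pi> dvd (\<Sum>k\<in>{..i+j} - {i}. A k * B (i + j - k))"
  proof (rule dvd_sum)
    fix k assume "k \<in> {..i+j} - {i}"
    then have "k < i \<or> (k > i \<and> i + j - k < j)" by auto
    then show "\<pi> dvd A k * B (i + j - k)" using Ak Bk by (meson dvd_mult dvd_mult2)
  qed
  have "\<pi> dvd A i * B j + (\<Sum>k\<in>{..i+j} - {i}. A k * B (i + j - k))"
    using d1 unfolding e1 e2 .
  then have "\<pi> dvd A i * B j" using dvd_add_left_iff[OF d2] by simp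
  then have "\<pi> dvd A i \<or> \<pi> dvd B j" using PRW[OF assms(1) AW BW assms(2)] by blast
  then show False using Ai Bj by blast
qed

lemma cancel:
  fixes p c t :: "('v,'k) mpoly"
  assumes p: "inV (insert x W) p" "irreducible p" "degx x p \<ge> 1"
    and c: "inV W c" "c \<noteq> 0" and t: "inV (insert x W) t" and d: "p dvd c * t"
  shows "p dvd t"
  using c d
proof (induction "mu W c" arbitrary: c rule: less_induct)
  case less
  show ?case
  proof (cases "c dvd 1")
    case True then show ?thesis using unit_cancel less.prems(3) by blast
  next
    case False
    obtain \<pi> where pi: "irreducible \<pi>" "\<pi> dvd c" "inV W \<pi>" using irr_divisor[OF fW less.prems(1,2) False] by blast
    obtain c' where c': "c = c' * \<pi>" using pi(2) by (metis dvd_def mult.commute)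
    have pi0: "\<pi> \<noteq> 0" using pi(1) by auto
    have c'0: "c' \<noteq> 0" using c' less.prems(2) by auto
    have c'W: "inV W c'" using inV_quot[of c \<pi> c' W] c' pi0 less.prems(1) by (simp add: mult.commute)
    have piu: "\<not> \<pi> dvd 1" using pi(1) by (simp add: irreducible_def)
    have mu: "mu W c' < mu W c" using mu_less[OF fW less.prems(1) c' less.prems(2) piu] .
    have p0: "p \<noteq> 0" using p(2) by auto
    obtain h where h: "c * t = p * h" using less.prems(3) by (auto elim: dvdE)
    have WV: "W \<subseteq> insert x W" by blast
    have ctV: "inV (insert x W) (c * t)" using inV_mult[OF inV_mono[OF less.prems(1) WV] t] .
    have hV: "inV (insert x W) h" using inV_quot[OF h p0 ctV] .
    have "\<pi> dvd p * h" using pi(2) h by (metis dvd_mult2)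
    then have "\<pi> dvd p \<or> \<pi> dvd h" using lift[OF pi(3) pi(1) p(1) hV] by blast
    then show ?thesis
    proof
      assume "\<pi> dvd p"
      then obtain p' where pp: "p = \<pi> * p'" by (auto elim: dvdE)
      then have "p' dvd 1" using p(2) piu unfolding irreducible_def by blast
      then have "degx x p' = 0" by (rule degx_unit)
      moreover have "degx x \<pi> = 0" using degx_const0[OF pi(3) xW] .
      moreover have "p' \<noteq> 0" using pp p0 by auto
      ultimately have "degx x p = 0" using degx_mult[OF pi0, of p' x] pp by simp
      then show ?thesis using p(3) by simp
    next
      assume "\<pi> dvd h"
      then obtain h' where hh: "h = \<pi> * h'" by (auto elim: dvdE)
      have "\<pi> * (c' * t) = \<pi> * (p * h')" using h hh c' by (simp add: algebra_simps)
      then have "c' * t = p * h'" using pi0 by simp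
      then have "p dvd c' * t" by simp
      then show ?thesis using less.hyps[OF mu c'W c'0] by blast
    qed
  qed
qed

lemma degq0:
  fixes p c q g :: "('v,'k) mpoly"
  assumes p: "inV (insert x W) p" "irreducible p" "degx x p \<ge> 1"
    and c: "inV W c" "c \<noteq> 0" and q: "inV (insert x W) q" and g: "inV (insert x W) g" "degx x g \<ge> 1"
    and e: "c * p = q * g"
  shows "degx x q = 0"
  using c q g e
proof (induction "mu W c" arbitrary: c q g rule: less_induct)
  case less
  have p0: "p \<noteq> 0" using p(2) by auto
  have q0: "q \<noteq> 0" using less.prems(2,6) p0 by auto
  have g0: "g \<noteq> 0" using less.prems(2,6) p0 by auto
  show ?case
  proof (cases "c dvd 1")
    case True
    obtain c' where cc: "1 = c * c'" using True by (auto elim: dvdE)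
    have "(c' * q) * g = c' * (c * p)" using less.prems(6) by (simp add: mult.assoc)
    also have "\<dots> = (c * c') * p" by (simp only: ac_simps)
    also have "\<dots> = p" using cc by simp
    finally have "p = (c' * q) * g" ..
    then have "c' * q dvd 1 \<or> g dvd 1" using p(2) unfolding irreducible_def by blast
    then show ?thesis
    proof
      assume "c' * q dvd 1"
      then have "degx x (c' * q) = 0" by (rule degx_unit)
      moreover have "c' \<noteq> 0" using cc by auto
      ultimately show ?thesis using degx_mult[of c' q x] q0 by simp
    next
      assume "g dvd 1"
      then have "degx x g = 0" by (rule degx_unit)
      then show ?thesis using less.prems(5) by simp
    qed
  next
    case False
    obtain \<pi> where pi: "irreducible \<pi>" "\<pi> dvd c" "inV W \<pi>" using irr_divisor[OF fW less.prems(1,2) False] by blast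
    obtain c' where c': "c = c' * \<pi>" using pi(2) by (metis dvd_def mult.commute)
    have pi0: "\<pi> \<noteq> 0" using pi(1) by auto
    have c'0: "c' \<noteq> 0" using c' less.prems(2) by auto
    have c'W: "inV W c'" using inV_quot[of c \<pi> c' W] c' pi0 less.prems(1) by (simp add: mult.commute)
    have piu: "\<not> \<pi> dvd 1" using pi(1) by (simp add: irreducible_def)
    have mu: "mu W c' < mu W c" using mu_less[OF fW less.prems(1) c' less.prems(2) piu] .
    have dpi: "degx x \<pi> = 0" using degx_const0[OF pi(3) xW] .
    have "\<pi> dvd q * g" using pi(2) less.prems(6) by (metis dvd_mult2)
    then have "\<pi> dvd q \<or> \<pi> dvd g" using lift[OF pi(3) pi(1) less.prems(3,4)] by blast
    then show ?thesis
    proof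
      assume "\<pi> dvd q"
      then obtain q' where qq: "q = \<pi> * q'" by (auto elim: dvdE)
      have q'0: "q' \<noteq> 0" using qq q0 by auto
      have "\<pi> * (c' * p) = \<pi> * (q' * g)" using less.prems(6) qq c' by (simp add: algebra_simps)
      then have e': "c' * p = q' * g" using pi0 by simp
      have q'V: "inV (insert x W) q'" using inV_quot[OF qq pi0 less.prems(3)] .
      have "degx x q' = 0" using less.hyps[OF mu c'W c'0 q'V less.prems(4,5) e'] .
      then show ?thesis using degx_mult[OF pi0 q'0, of x] qq dpi by simp
    next
      assume "\<pi> dvd g"
      then obtain g' where gg: "g = \<pi> * g'" by (auto elim: dvdE)
      have g'0: "g' \<noteq> 0" using gg g0 by auto
      have "\<pi> * (c' * p) = \<pi> * (q * g')" using less.prems(6) gg c' by (simp add: algebra_simps)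
      then have e': "c' * p = q * g'" using pi0 by simp
      have g'V: "inV (insert x W) g'" using inV_quot[OF gg pi0 less.prems(4)] .
      have "degx x g' = degx x g" using degx_mult[OF pi0 g'0, of x] gg dpi by simp
      then have "degx x g' \<ge> 1" using less.prems(5) by simp
      then show ?thesis using less.hyps[OF mu c'W c'0 less.prems(3) g'V _ e'] by blast
    qed
  qed
qed

lemma step:
  fixes p a b :: "('v,'k) mpoly"
  assumes p: "inV (insert x W) p" "irreducible p" and a: "inV (insert x W) a" and b: "inV (insert x W) b"
    and d: "p dvd a * b"
  shows "p dvd a \<or> p dvd b"
proof (cases "degx x p = 0")
  case True
  have "inV W p" using inV_W_of[OF p(1) True xW] .
  then show ?thesis using lift[OF _ p(2) a b d] by blast
next
  case False
  then have dp: "degx x p \<ge> 1" by simp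
  have p0: "p \<noteq> 0" using p(2) by auto
  show ?thesis
  proof (cases "a = 0")
    case True then show ?thesis by simp
  next
    case False
    define V where "V = insert x W"
    define S where "S = {g. \<exists>u v. inV V u \<and> inV V v \<and> g = u * a + v * p \<and> g \<noteq> 0}"
    have aS: "a \<in> S" unfolding S_def using False by (intro CollectI exI[of _ 1] exI[of _ 0]) simp
    obtain g where gS: "g \<in> S" and gmin: "\<And>g'. g' \<in> S \<Longrightarrow> degx x g \<le> degx x g'"
      using ex_has_least_nat[of "\<lambda>g. g \<in> S" a "degx x"] aS by blast
    obtain u v where uv: "inV V u" "inV V v" "g = u * a + v * p" "g \<noteq> 0" using gS unfolding S_def by blast
    have pV: "inV V p" and aV: "inV V a" and bV: "inV V b" using p a b unfolding V_def by auto
    have gV: "inV V g" unfolding uv(3) using uv pV aV by (intro inV_add inV_mult)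
    have red: "r = 0" if "inV V u'" "inV V v'" "r = u' * a + v' * p" "degx x r < degx x g" for r u' v'
    proof (rule ccontr)
      assume "r \<noteq> 0"
      then have "r \<in> S" unfolding S_def using that by blast
      then show False using gmin that(4) by fastforce
    qed
    show ?thesis
    proof (cases "degx x g = 0")
      case True
      have gW: "inV W g" using inV_W_of[OF gV[unfolded V_def] True xW] .
      have "g * b = u * (a * b) + (v * b) * p" unfolding uv(3) by (simp add: algebra_simps)
      then have "p dvd g * b" using d by simp
      then have "p dvd b" using cancel[OF p dp gW uv(4) b] by blast
      then show ?thesis by blast
    next
      case False
      then have dg: "degx x g \<ge> 1" by simp
      define l where "l = lcx x g"
      have lW: "inV W l" using inV_lcx[OF gV[unfolded V_def], of x] xW unfolding l_def
        by (metis Diff_insert_absorb)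
      have l0: "l \<noteq> 0" using lcx_nz[OF uv(4)] unfolding l_def .
      obtain k q r where kqr: "inV V q" "inV V r" "l ^ k * p = q * g + r" "degx x r < degx x g"
        using pdiv_U[OF xW gV[unfolded V_def] p(1) dg] unfolding V_def l_def by blast
      have lV: "inV V l" using inV_mono[OF lW] unfolding V_def by blast
      have "r = (- q * u) * a + (l ^ k - q * v) * p" using kqr(3) unfolding uv(3) by (simp add: algebra_simps)
      moreover have "inV V (- q * u)" using kqr(1) uv(1) by (intro inV_mult inV_uminus)
      moreover have "inV V (l ^ k - q * v)" using kqr(1) uv(2) lV by (intro inV_diff inV_mult inV_power)
      ultimately have r0: "r = 0" using red kqr(4) by blast
      then have e1: "l ^ k * p = q * g" using kqr(3) by simp
      have lkW: "inV W (l ^ k)" using inV_power[OF lW] .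
      have lk0: "l ^ k \<noteq> 0" using l0 by simp
      have dq: "degx x q = 0" using degq0[OF p dp lkW lk0 kqr(1)[unfolded V_def] gV[unfolded V_def] dg e1] .
      have qW: "inV W q" using inV_W_of[OF kqr(1)[unfolded V_def] dq xW] .
      have q0: "q \<noteq> 0" using e1 lk0 p0 by auto
      obtain m q2 r2 where mqr: "inV V q2" "inV V r2" "l ^ m * a = q2 * g + r2" "degx x r2 < degx x g"
        using pdiv_U[OF xW gV[unfolded V_def] a dg] unfolding V_def l_def by blast
      have "r2 = (l ^ m - q2 * u) * a + (- q2 * v) * p" using mqr(3) unfolding uv(3) by (simp add: algebra_simps)
      moreover have "inV V (- q2 * v)" using mqr(1) uv(2) by (intro inV_mult inV_uminus)
      moreover have "inV V (l ^ m - q2 * u)" using mqr(1) uv(1) lV by (intro inV_diff inV_mult inV_power)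
      ultimately have r20: "r2 = 0" using red mqr(4) by blast
      then have e2: "l ^ m * a = q2 * g" using mqr(3) by simp
      have "(q * l ^ m) * a = q2 * (q * g)" using e2 by (simp add: algebra_simps)
      also have "\<dots> = (q2 * l ^ k) * p" using e1 by (simp add: algebra_simps)
      finally have "p dvd (q * l ^ m) * a" by (metis dvd_triv_right)
      moreover have "inV W (q * l ^ m)" using qW lW by (intro inV_mult inV_power)
      moreover have "q * l ^ m \<noteq> 0" using q0 l0 by simp
      ultimately have "p dvd a" using cancel[OF p dp _ _ a] by blast
      then show ?thesis by blast
    qed
  qed
qed

end

lemma irreducible_prime_aux:
  fixes p a b :: "('v::linorder,'k::field) mpoly"
  assumes "finite V"
  shows "inV V p \<Longrightarrow> inV V a \<Longrightarrow> inV V b \<Longrightarrow> irreducible p \<Longrightarrow> p dvd a * b \<Longrightarrow> p dvd a \<or> p dvd b"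
  using assms
proof (induction V arbitrary: p a b rule: finite_induct)
  case empty
  then have "p dvd 1" using unit_iff_inV_empty[of p] by (auto simp: irreducible_def)
  then show ?case using empty.prems(4) by (auto simp: irreducible_def)
next
  case (insert x F)
  show ?case by (rule step[OF insert.hyps(2,1) _ insert.prems(1,4,2,3,5)]) (rule insert.IH; assumption)
qed

lemma irreducible_prime:
  fixes p a b :: "('v::{linorder,finite},'k::field) mpoly"
  assumes "irreducible p" "p dvd a * b"
  shows "p dvd a \<or> p dvd b"
  using irreducible_prime_aux[of UNIV p a b] assms by simp

definition dx :: "'v \<Rightarrow> ('v::linorder, 'k::field_char_0) mpoly \<Rightarrow> ('v, 'k) mpoly" where
  "dx x p = ev x (pderiv (phi x p))"

lemma phi_dx: "phi x (dx x p) = pderiv (phi x p)"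
  unfolding dx_def by (rule phi_ev) (intro cin_pderiv cin_phi')

lemma dx_add: "dx x (p + q) = dx x p + dx x q"
  unfolding dx_def phi_add pderiv_add by simp

lemma dx_mult: "dx x (p * q) = p * dx x q + q * dx x p"
  unfolding dx_def phi_mult pderiv_mult by simp

lemma dx_const: "dx x (sng 0 (c::'k::field_char_0) :: ('v::linorder, 'k) mpoly) = 0"
proof -
  have "inV (-{x}) (sng 0 c :: ('v::linorder, 'k::field_char_0) mpoly)" by (rule inV_const)
  then show ?thesis unfolding dx_def by (simp add: phi_const)
qed

lemma not_dvd_dx:
  assumes "degx x p \<ge> 1"
  shows "\<not> p dvd dx x p"
proof
  assume "p dvd dx x p"
  then obtain t where "dx x p = p * t" by (auto elim: dvdE)
  then have "pderiv (phi x p) = phi x p * phi x t" using phi_dx[of x p] by (simp add: phi_mult)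
  then have "phi x p dvd pderiv (phi x p)" by simp
  moreover have "degree (phi x p) \<noteq> 0" using assms unfolding degx_def by simp
  ultimately show False using not_dvd_pderiv by blast
qed

lemma nonconst_degx:
  fixes p :: "('v::linorder, 'k::field) mpoly"
  assumes "irreducible p" shows "\<exists>x. degx x p \<ge> 1"
proof -
  have "p \<noteq> 0" "\<not> p dvd 1" using assms by (auto simp: irreducible_def)
  then obtain x where "0 < degx x p" using nonunit_degx[of UNIV p] by auto
  then show ?thesis by (intro exI[of _ x]) simp
qed

lemma irr_not_unit: "irreducible p \<Longrightarrow> \<not> p dvd 1" by (simp add: irreducible_def)

lemma prime_power_cancel:
  fixes q s g :: "('v::{linorder,finite}, 'k::field) mpoly"
  assumes "irreducible q" "\<not> q dvd g" "q ^ e dvd s * g"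
  shows "q ^ e dvd s"
  using assms(3)
proof (induction e arbitrary: s)
  case 0 then show ?case by simp
next
  case (Suc e)
  have "q dvd s * g" using Suc.prems by (metis dvd_mult_left power_Suc)
  then have "q dvd s" using irreducible_prime[OF assms(1)] assms(2) by blast
  then obtain s' where s: "s = q * s'" by (auto elim: dvdE)
  have q0: "q \<noteq> 0" using assms(1) by auto
  have "q * q ^ e dvd q * (s' * g)" using Suc.prems s by (simp add: mult.assoc)
  then have "q ^ e dvd s' * g" using q0 by simp
  then have "q ^ e dvd s'" by (rule Suc.IH)
  then show ?case using s by simp
qed

lemma irr_dvd_power:
  fixes q p :: "('v::{linorder,finite}, 'k::field) mpoly"
  assumes "irreducible q" "q dvd p ^ e" shows "q dvd p"
  using assms(2)
proof (induction e)
  case 0 then show ?case using assms(1) by (simp add: irreducible_def)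
next
  case (Suc e)
  then have "q dvd p * p ^ e" by simp
  then show ?case using irreducible_prime[OF assms(1)] Suc.IH by blast
qed

lemma irr_dvd_prod:
  fixes q :: "('v::{linorder,finite}, 'k::field) mpoly"
  assumes "irreducible q" "finite I" "q dvd (\<Prod>i\<in>I. f i)" shows "\<exists>i\<in>I. q dvd f i"
  using assms(2,3)
proof (induction I rule: finite_induct)
  case empty then show ?case using assms(1) by (simp add: irreducible_def)
next
  case (insert j I)
  then have "q dvd f j * (\<Prod>i\<in>I. f i)" by simp
  then show ?case using irreducible_prime[OF assms(1)] insert.IH by blast
qed

lemma irr_dvd_irr:
  fixes q p :: "('v::linorder, 'k::field) mpoly"
  assumes "irreducible q" "irreducible p" "q dvd p" shows "p dvd q"
proof -
  obtain u where u: "p = q * u" using assms(3) by (auto elim: dvdE)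
  then have "u dvd 1" using assms unfolding irreducible_def by blast
  then obtain u' where "1 = u * u'" by (auto elim: dvdE)
  then have "q = p * u'" using u by (metis mult.assoc mult.right_neutral)
  then show ?thesis by simp
qed

lemma prod_powers_dvd:
  fixes fs :: "nat \<Rightarrow> ('v::{linorder,finite}, 'k::field) mpoly"
  assumes irr: "\<forall>i<r. irreducible (fs i)"
    and na: "\<forall>i<r. \<forall>j<r. i \<noteq> j \<longrightarrow> \<not> (fs i dvd fs j \<and> fs j dvd fs i)"
    and d: "\<forall>i<r. fs i ^ es i dvd s"
  shows "(\<Prod>i<r. fs i ^ es i) dvd s"
  using irr na d
proof (induction r)
  case 0 then show ?case by simp
next
  case (Suc r)
  have IH: "(\<Prod>i<r. fs i ^ es i) dvd s" using Suc.IH Suc.prems by simp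
  then obtain t where t: "s = (\<Prod>i<r. fs i ^ es i) * t" by (auto elim: dvdE)
  have ir: "irreducible (fs r)" using Suc.prems(1) by simp
  have nd: "\<not> fs r dvd (\<Prod>i<r. fs i ^ es i)"
  proof
    assume "fs r dvd (\<Prod>i<r. fs i ^ es i)"
    then obtain i where i: "i < r" "fs r dvd fs i ^ es i" using irr_dvd_prod[OF ir, of "{..<r}"] by auto
    then have "fs r dvd fs i" using irr_dvd_power[OF ir] by blast
    moreover then have "fs i dvd fs r" using irr_dvd_irr[OF ir] Suc.prems(1) i(1) by simp
    ultimately show False using Suc.prems(2) i(1) by (metis less_Suc_eq nat_neq_iff)
  qed
  have "fs r ^ es r dvd t * (\<Prod>i<r. fs i ^ es i)" using Suc.prems(3) t by (simp add: mult.commute)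
  then have "fs r ^ es r dvd t" using prime_power_cancel[OF ir nd] by blast
  then show ?case using t by (simp add: mult_dvd_mono)
qed

typedef 'n ov = "UNIV :: 'n set" morphisms rep_ov abs_ov by simp

lemma inj_rep_ov: "inj rep_ov" by (meson injI rep_ov_inject)
lemma inj_abs_ov: "inj abs_ov" by (meson injI abs_ov_inject UNIV_I)

instance ov :: (finite) finite
proof
  have "UNIV = abs_ov ` (UNIV :: 'a set)" by (metis abs_ov_cases surj_def)
  then show "finite (UNIV :: 'a ov set)" by (metis finite finite_imageI)
qed

definition enc :: "'n::finite \<Rightarrow> nat" where "enc = (SOME f. inj f)"

lemma inj_enc: "inj (enc :: 'n::finite \<Rightarrow> nat)"
proof -
  obtain f :: "'n \<Rightarrow> nat" and n where "inj_on f UNIV" using finite_imp_inj_to_nat_seg[OF finite_UNIV] by blast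
  then have "\<exists>f::'n \<Rightarrow> nat. inj f" by blast
  then show ?thesis unfolding enc_def by (rule someI_ex)
qed

instantiation ov :: (finite) linorder begin
definition less_eq_ov :: "'a ov \<Rightarrow> 'a ov \<Rightarrow> bool" where "less_eq_ov a b = (enc (rep_ov a) \<le> enc (rep_ov b))"
definition less_ov :: "'a ov \<Rightarrow> 'a ov \<Rightarrow> bool" where "less_ov a b = (enc (rep_ov a) < enc (rep_ov b))"
instance
proof
  have ij: "enc (rep_ov a) = enc (rep_ov b) \<Longrightarrow> a = b" for a b :: "'a ov"
    using inj_enc inj_rep_ov by (metis injD)
  fix x y z :: "'a ov"
  show "(x < y) = (x \<le> y \<and> \<not> y \<le> x)" by (auto simp: less_eq_ov_def less_ov_def)
  show "x \<le> x" by (simp add: less_eq_ov_def)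
  show "x \<le> y \<Longrightarrow> y \<le> z \<Longrightarrow> x \<le> z" by (simp add: less_eq_ov_def)
  show "x \<le> y \<Longrightarrow> y \<le> x \<Longrightarrow> x = y" using ij by (simp add: less_eq_ov_def)
  show "x \<le> y \<or> y \<le> x" by (auto simp: less_eq_ov_def)
qed
end

lemma lk_map_key: "inj f \<Longrightarrow> lk (Poly_Mapping.map_key f p) k = lk p (f k)"
  by (simp add: map_key.rep_eq)

definition nu :: "('n ov \<Rightarrow>\<^sub>0 nat) \<Rightarrow> ('n \<Rightarrow>\<^sub>0 nat)" where "nu M = Poly_Mapping.map_key abs_ov M"
definition mm :: "('n \<Rightarrow>\<^sub>0 nat) \<Rightarrow> ('n ov \<Rightarrow>\<^sub>0 nat)" where "mm m = Poly_Mapping.map_key rep_ov m"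

lemma lk_nu: "lk (nu M) n = lk M (abs_ov n)" by (simp add: nu_def lk_map_key inj_abs_ov)
lemma lk_mm: "lk (mm m) v = lk m (rep_ov v)" by (simp add: mm_def lk_map_key inj_rep_ov)
lemma nu_mm[simp]: "nu (mm m) = m" by (rule poly_mapping_eqI) (simp add: lk_nu lk_mm abs_ov_inverse)
lemma mm_nu[simp]: "mm (nu M) = M" by (rule poly_mapping_eqI) (simp add: lk_nu lk_mm rep_ov_inverse)
lemma inj_nu: "inj nu" by (metis injI mm_nu)
lemma inj_mm: "inj mm" by (metis injI nu_mm)
lemma bij_nu: "bij nu" by (metis bijI' mm_nu nu_mm)
lemma nu_add: "nu (a + b) = nu a + nu b" by (rule poly_mapping_eqI) (simp add: lk_nu lookup_add)
lemma nu_0[simp]: "nu 0 = 0" by (rule poly_mapping_eqI) (simp add: lk_nu)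
lemma nu_eq_0: "nu M = 0 \<longleftrightarrow> M = 0" by (metis mm_nu nu_0)

definition psi :: "('n, 'k::comm_ring_1) mpoly \<Rightarrow> ('n ov, 'k) mpoly" where
  "psi p = Poly_Mapping.map_key nu p"
definition psi' :: "('n ov, 'k::comm_ring_1) mpoly \<Rightarrow> ('n, 'k) mpoly" where
  "psi' P = Poly_Mapping.map_key mm P"

lemma lk_psi: "lk (psi p) M = lk p (nu M)" by (simp add: psi_def lk_map_key inj_nu)
lemma lk_psi': "lk (psi' P) m = lk P (mm m)" by (simp add: psi'_def lk_map_key inj_mm)
lemma psi'_psi[simp]: "psi' (psi p) = p" by (rule poly_mapping_eqI) (simp add: lk_psi lk_psi')
lemma psi_psi'[simp]: "psi (psi' P) = P" by (rule poly_mapping_eqI) (simp add: lk_psi lk_psi')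
lemma psi_add: "psi (p + q) = psi p + psi q" by (rule poly_mapping_eqI) (simp add: lk_psi lookup_add)
lemma psi_0[simp]: "psi 0 = 0" by (rule poly_mapping_eqI) (simp add: lk_psi)
lemma psi_const: "psi (sng 0 c) = sng 0 c"
  by (rule poly_mapping_eqI) (simp add: lk_psi lookup_single when_def nu_eq_0 eq_commute[of 0])
lemma psi_1[simp]: "psi 1 = 1" using psi_const[of 1] by (simp only: single_one)

lemma psi_mult: "psi (p * q) = psi p * psi q"
proof (rule poly_mapping_eqI)
  fix M
  have inner: "(\<Sum>R. lk (psi q) R when M = L + R) = (\<Sum>r. lk q r when nu M = nu L + r)" for L
  proof (rule sym, rule Sum_any.reindex_cong[OF bij_nu])
    show "(\<lambda>r. lk q r when nu M = nu L + r) \<circ> nu = (\<lambda>R. lk (psi q) R when M = L + R)"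
      by (rule ext) (simp add: lk_psi nu_add[symmetric] inj_eq[OF inj_nu])
  qed
  have "lk (psi p * psi q) M = (\<Sum>L. lk (psi p) L * (\<Sum>R. lk (psi q) R when M = L + R))"
    by (rule lookup_mult)
  also have "\<dots> = (\<Sum>L. lk p (nu L) * (\<Sum>r. lk q r when nu M = nu L + r))"
    by (simp only: inner) (simp add: lk_psi)
  also have "\<dots> = (\<Sum>l. lk p l * (\<Sum>r. lk q r when nu M = l + r))"
    by (rule sym, rule Sum_any.reindex_cong[OF bij_nu]) (simp add: o_def)
  also have "\<dots> = lk (p * q) (nu M)" by (rule lookup_mult[symmetric])
  finally show "lk (psi (p * q)) M = lk (psi p * psi q) M" by (simp add: lk_psi)
qed

lemma psi_inj: "psi a = psi b \<Longrightarrow> a = b" by (metis psi'_psi)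

lemma psi'_add: "psi' (P + Q) = psi' P + psi' Q" by (metis psi_add psi_psi' psi'_psi)
lemma psi'_mult: "psi' (P * Q) = psi' P * psi' Q" by (metis psi_mult psi_psi' psi'_psi)
lemma psi'_const: "psi' (sng 0 c) = sng 0 c" by (metis psi_const psi'_psi)

lemma psi_dvd_iff: "psi a dvd psi b \<longleftrightarrow> a dvd b"
proof
  assume "psi a dvd psi b"
  then obtain T where "psi b = psi a * T" by (auto elim: dvdE)
  then have "psi b = psi (a * psi' T)" by (simp add: psi_mult)
  then have "b = a * psi' T" by (rule psi_inj)
  then show "a dvd b" by simp
next
  assume "a dvd b"
  then obtain t where "b = a * t" by (auto elim: dvdE)
  then show "psi a dvd psi b" by (simp add: psi_mult)
qed

lemma psi_power: "psi (p ^ n) = psi p ^ n"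
  by (induction n) (simp_all add: psi_mult)

lemma psi_prod: "psi (\<Prod>i<(r::nat). f i) = (\<Prod>i<r. psi (f i))"
  by (induction r) (simp_all add: psi_mult)

lemma psi_eq_0: "psi p = 0 \<longleftrightarrow> p = 0" by (metis psi'_psi psi_0)

lemma psi_irr:
  fixes p :: "('n, 'k::comm_ring_1) mpoly"
  assumes "irreducible p" shows "irreducible (psi p)"
  unfolding irreducible_def
proof (intro conjI allI impI)
  show "psi p \<noteq> 0" using assms psi_eq_0 by (auto simp: irreducible_def)
  show "\<not> psi p dvd 1" using assms psi_dvd_iff[of p 1] by (auto simp: irreducible_def)
  fix A B assume "psi p = A * B"
  then have "p = psi' A * psi' B" by (metis psi'_mult psi'_psi)
  then have "psi' A dvd 1 \<or> psi' B dvd 1" using assms by (auto simp: irreducible_def)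
  then show "A dvd 1 \<or> B dvd 1" using psi_dvd_iff[of "psi' A" 1] psi_dvd_iff[of "psi' B" 1] by simp
qed

definition dA :: "'n \<Rightarrow> ('n::finite, 'k::field_char_0) mpoly \<Rightarrow> ('n, 'k) mpoly" where
  "dA j p = psi' (dx (abs_ov j) (psi p))"

lemma psi_dA: "psi (dA j p) = dx (abs_ov j) (psi p)" by (simp add: dA_def)

lemma dA_Der: "(dA (j::'n::finite) :: ('n, 'k::field_char_0) mpoly \<Rightarrow> _) \<in> Der"
  unfolding Der_def
proof (intro CollectI conjI allI)
  fix p q :: "('n::finite, 'k::field_char_0) mpoly"
  show "dA j (p + q) = dA j p + dA j q"
    by (rule psi_inj) (simp add: psi_dA psi_add dx_add)
  show "dA j (p * q) = p * dA j q + q * dA j p"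
    by (rule psi_inj) (simp add: psi_dA psi_add psi_mult dx_mult)
next
  fix c :: 'k and p :: "('n::finite, 'k::field_char_0) mpoly"
  show "dA j (const_mp c * p) = const_mp c * dA j p"
    by (rule psi_inj) (simp add: psi_dA psi_mult const_mp_def psi_const dx_mult dx_const)
qed

lemma smult_der_Der:
  assumes "\<delta> \<in> Der" shows "smult_der t \<delta> \<in> Der"
  using assms unfolding Der_def smult_der_def by (auto simp: algebra_simps)

theorem mainTheorem3:
  fixes f :: "('n::finite, 'k::field_char_0) mpoly"
    and c :: 'k and r :: nat
    and fs :: "nat \<Rightarrow> ('n, 'k) mpoly" and es :: "nat \<Rightarrow> nat"
  assumes "f \<noteq> 0"
    and "c \<noteq> 0"
    and "\<forall>i<r. irreducible (fs i)"
    and "\<forall>i<r. es i \<ge> 1"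
    and "\<forall>i<r. \<forall>j<r. i \<noteq> j \<longrightarrow> \<not> (fs i dvd fs j \<and> fs j dvd fs i)"
    and "f = const_mp c * (\<Prod>i<r. fs i ^ es i)"
  shows "ann_quot (Der \<inter> (\<Inter>i<r. Der_log (fs i) (es i))) = {s * f | s. True}"
proof (intro equalityI subsetI)
  fix s assume s: "s \<in> ann_quot (Der \<inter> (\<Inter>i<r. Der_log (fs i) (es i)))"
  define P where "P = (\<Prod>i<r. fs i ^ es i)"
  have each: "psi (fs i) ^ es i dvd psi s" if i: "i < r" for i
  proof -
    have irr: "irreducible (psi (fs i))" using psi_irr assms(3) i by blast
    obtain x where x: "degx x (psi (fs i)) \<ge> 1" using nonconst_degx[OF irr] by blast
    define j where "j = rep_ov x"
    have xj: "abs_ov j = x" unfolding j_def by (rule rep_ov_inverse)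
    have "smult_der s (dA j) \<in> Der_log (fs i) (es i)" using s dA_Der i unfolding ann_quot_def by blast
    then have "fs i ^ es i dvd s * dA j (fs i)" unfolding Der_log_def smult_der_def by blast
    then have "psi (fs i) ^ es i dvd psi s * dx x (psi (fs i))"
      using psi_dvd_iff[of "fs i ^ es i" "s * dA j (fs i)"] by (simp add: psi_power psi_mult psi_dA xj)
    then show ?thesis using prime_power_cancel[OF irr not_dvd_dx[OF x]] by blast
  qed
  have "(\<Prod>i<r. psi (fs i) ^ es i) dvd psi s"
  proof (rule prod_powers_dvd)
    show "\<forall>i<r. irreducible (psi (fs i))" using psi_irr assms(3) by blast
    show "\<forall>i<r. \<forall>j<r. i \<noteq> j \<longrightarrow> \<not> (psi (fs i) dvd psi (fs j) \<and> psi (fs j) dvd psi (fs i))"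
      using assms(5) by (simp add: psi_dvd_iff)
    show "\<forall>i<r. psi (fs i) ^ es i dvd psi s" using each by blast
  qed
  then have "psi P dvd psi s" unfolding P_def by (simp add: psi_prod psi_power)
  then have "P dvd s" by (simp add: psi_dvd_iff)
  then obtain t where t: "s = P * t" by (auto elim: dvdE)
  have ci: "const_mp c * const_mp (inverse c) = (1 :: ('n, 'k) mpoly)"
    unfolding const_mp_def mult_single by (simp only: add_0 right_inverse[OF assms(2)] single_one)
  have "(const_mp (inverse c) * t) * f = (const_mp c * const_mp (inverse c)) * (P * t)"
    unfolding assms(6) P_def by (simp only: ac_simps)
  also have "\<dots> = s" unfolding ci t by simp
  finally have "s = (const_mp (inverse c) * t) * f" ..
  then show "s \<in> {s * f | s. True}" by blast
next
  fix s assume "s \<in> {s * f | s. True}"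
  then obtain s' where s': "s = s' * f" by blast
  show "s \<in> ann_quot (Der \<inter> (\<Inter>i<r. Der_log (fs i) (es i)))"
    unfolding ann_quot_def
  proof (intro CollectI ballI IntI INT_I)
    fix \<delta> :: "('n, 'k) mpoly \<Rightarrow> ('n, 'k) mpoly" assume d: "\<delta> \<in> Der"
    show "smult_der s \<delta> \<in> Der" using smult_der_Der[OF d] .
    fix i assume i: "i \<in> {..<r}"
    have "fs i ^ es i dvd (\<Prod>i<r. fs i ^ es i)" using i by (intro dvd_prodI) auto
    then have "fs i ^ es i dvd f" unfolding assms(6) by (rule dvd_mult)
    then have "fs i ^ es i dvd smult_der s \<delta> (fs i)" unfolding smult_der_def s' by simp
    then show "smult_der s \<delta> \<in> Der_log (fs i) (es i)" unfolding Der_log_def using smult_der_Der[OF d] by blast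
  qed
qed

end
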